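(* Consider an instance of the Max-Buying-PL-Limited-$(\alpha,t)$ Problem (defined in the context). There is a non-negative integer $\ell$, whose value is bounded by a function that is linear in the length of the (binary) representation of the instance, such that there is an optimal solution in which the price of every item is at least $d_\ell$.
   Context: Items are $I=\{1,\dots,n\}$, bidders form a finite set $B$, $v=(v_{ib})$ is a non-negative integer valuation matrix and $C_i$ ($i\in I$) are non-negative integer capacities. For a rational $\alpha>1$, a positive integer $t$, and every integer $k\ge 0$, let $d_k=\max\{v_{ib}: i\in I,b\in B\}/\alpha^k$. The Max-Buying-PL-Limited-$(\alpha,t)$ Problem: choose prices $p_1\ge p_2\ge\dots\ge p_n$ with each $p_i\in\{d_0,d_1,\dots\}$, and an allocation, i.e. a set of item–bidder pairs $(i,b)$ (bidder $b$ receives a copy of $i$), such that each item $i$ is given to at most $C_i$ bidders, $p_i\le v_{ib}$ whenever $b$ receives $i$, and for every integer $r\ge 0$ each bidder receives at most one item whose price lies in $\{d_{rt},d_{rt+1},\dots,d_{(r+1)t-1}\}$ (a bidder may thus receive several items). The profit, to be maximized, is the sum over all allocated pairs $(i,b)$ of $p_i$. *)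

theory Defs
  imports Complex_Main
begin

text \<open>Instance: items {1..n}, a finite set B of bidders (natural numbers),
  valuations v i b (nat), capacities C i (nat). Parameters: rational alpha > 1, t > 0.\<close>

definition maxval :: "nat \<Rightarrow> nat set \<Rightarrow> (nat \<Rightarrow> nat \<Rightarrow> nat) \<Rightarrow> nat" where
  "maxval n B v = Max (insert 0 {v i b | i b. i \<in> {1..n} \<and> b \<in> B})"

definition dprice :: "rat \<Rightarrow> nat \<Rightarrow> nat set \<Rightarrow> (nat \<Rightarrow> nat \<Rightarrow> nat) \<Rightarrow> nat \<Rightarrow> real" where
  "dprice \<alpha> n B v k = real (maxval n B v) / (real_of_rat \<alpha>) ^ k"

definition feasible ::
  "rat \<Rightarrow> nat \<Rightarrow> nat \<Rightarrow> nat set \<Rightarrow> (nat \<Rightarrow> nat \<Rightarrow> nat) \<Rightarrow> (nat \<Rightarrow> nat)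
   \<Rightarrow> (nat \<Rightarrow> real) \<Rightarrow> (nat \<times> nat) set \<Rightarrow> bool" where
  "feasible \<alpha> t n B v C p A \<longleftrightarrow>
     (\<forall>i \<in> {1..n}. \<exists>k. p i = dprice \<alpha> n B v k) \<and>
     (\<forall>i j. 1 \<le> i \<and> i \<le> j \<and> j \<le> n \<longrightarrow> p j \<le> p i) \<and>
     A \<subseteq> {1..n} \<times> B \<and>
     (\<forall>i \<in> {1..n}. card {b. (i, b) \<in> A} \<le> C i) \<and>
     (\<forall>(i, b) \<in> A. p i \<le> real (v i b)) \<and>
     (\<forall>r b. card {i. (i, b) \<in> A \<and>
               (\<exists>k. r * t \<le> k \<and> k < (r + 1) * t \<and> p i = dprice \<alpha> n B v k)} \<le> 1)"

definition profit :: "(nat \<Rightarrow> real) \<Rightarrow> (nat \<times> nat) set \<Rightarrow> real" where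
  "profit p A = (\<Sum>(i, b) \<in> A. p i)"

definition optimal ::
  "rat \<Rightarrow> nat \<Rightarrow> nat \<Rightarrow> nat set \<Rightarrow> (nat \<Rightarrow> nat \<Rightarrow> nat) \<Rightarrow> (nat \<Rightarrow> nat)
   \<Rightarrow> (nat \<Rightarrow> real) \<Rightarrow> (nat \<times> nat) set \<Rightarrow> bool" where
  "optimal \<alpha> t n B v C p A \<longleftrightarrow> feasible \<alpha> t n B v C p A \<and>
     (\<forall>p' A'. feasible \<alpha> t n B v C p' A' \<longrightarrow> profit p' A' \<le> profit p A)"

fun bitlen :: "nat \<Rightarrow> nat" where
  "bitlen x = (if x \<le> 1 then 1 else 1 + bitlen (x div 2))"

text \<open>Length of the binary encoding of an instance (up to constant factors).\<close>
definition inst_size :: "nat \<Rightarrow> nat set \<Rightarrow> (nat \<Rightarrow> nat \<Rightarrow> nat) \<Rightarrow> (nat \<Rightarrow> nat) \<Rightarrow> nat" where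
  "inst_size n B v C = n + card B + (\<Sum>i\<in>{1..n}. bitlen (C i))
     + (\<Sum>i\<in>{1..n}. \<Sum>b\<in>B. bitlen (v i b))"

end

theory Submission
  imports Defs "HOL-Library.FuncSet"
begin

lemma dprice_mono:
  assumes "\<alpha> > 1" "k \<le> k'"
  shows "dprice \<alpha> n B v k' \<le> dprice \<alpha> n B v k"
proof -
  have a: "real_of_rat \<alpha> > 1" using assms(1) by (simp add: of_rat_less_1_iff)
  have "real_of_rat \<alpha> ^ k \<le> real_of_rat \<alpha> ^ k'"
    using a assms(2) by (simp add: power_increasing)
  moreover have "0 < real_of_rat \<alpha> ^ k" using a by simp
  ultimately show ?thesis unfolding dprice_def
    by (simp add: divide_left_mono)
qed

lemma dprice_le_iff:
  assumes "\<alpha> > 1" "maxval n B v > 0"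
  shows "dprice \<alpha> n B v k \<le> dprice \<alpha> n B v k' \<longleftrightarrow> k' \<le> k"
proof -
  have a: "real_of_rat \<alpha> > 1" using assms(1) by (simp add: of_rat_less_1_iff)
  have M: "real (maxval n B v) > 0" using assms(2) by simp
  have "dprice \<alpha> n B v k \<le> dprice \<alpha> n B v k' \<longleftrightarrow>
        real_of_rat \<alpha> ^ k' \<le> real_of_rat \<alpha> ^ k"
    unfolding dprice_def using a M by (simp add: divide_le_cancel frac_le_eq divide_le_eq field_simps)
  also have "\<dots> \<longleftrightarrow> k' \<le> k" using a by simp
  finally show ?thesis .
qed

lemma dprice_inj:
  assumes "\<alpha> > 1" "maxval n B v > 0" "dprice \<alpha> n B v k = dprice \<alpha> n B v k'"
  shows "k = k'"
  using dprice_le_iff[OF assms(1,2)] assms(3) by (metis order.antisym order.refl)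

lemma dprice_pos:
  assumes "\<alpha> > 1" "maxval n B v > 0"
  shows "dprice \<alpha> n B v k > 0"
proof -
  have a: "real_of_rat \<alpha> > 1" using assms(1) by (simp add: of_rat_less_1_iff)
  then show ?thesis using assms(2) unfolding dprice_def by simp
qed

lemma dprice_zero: "maxval n B v = 0 \<Longrightarrow> dprice \<alpha> n B v k = 0"
  unfolding dprice_def by simp

lemma bitlen_gt: "x < 2 ^ bitlen x"
proof (induction x rule: bitlen.induct)
  case (1 x)
  show ?case
  proof (cases "x \<le> 1")
    case True then show ?thesis by auto
  next
    case False
    then have "x div 2 < 2 ^ bitlen (x div 2)" using 1 by simp
    then show ?thesis using False by simp
  qed
qed

lemma maxval_cases:
  assumes "finite B"
  shows "maxval n B v = 0 \<or> (\<exists>i b. i \<in> {1..n} \<and> b \<in> B \<and> maxval n B v = v i b)"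
proof -
  have eq: "{v i b | i b. i \<in> {1..n} \<and> b \<in> B} = (\<lambda>(i,b). v i b) ` ({1..n} \<times> B)" by force
  have fin: "finite (insert 0 {v i b | i b. i \<in> {1..n} \<and> b \<in> B})"
    unfolding eq using assms by simp
  have "maxval n B v \<in> insert 0 {v i b | i b. i \<in> {1..n} \<and> b \<in> B}"
    unfolding maxval_def using fin by (rule Max_in) simp
  then show ?thesis by auto
qed


lemma exchange:
  fixes \<alpha> :: rat and t :: nat
  assumes a1: "\<alpha> > 1" and t0: "t > 0" and M0: "maxval n B v > 0"
    and K0: "dprice \<alpha> n B v (K0 * t) \<le> 1"
    and F: "feasible \<alpha> t n B v C p A"
  shows "\<exists>p' A'. feasible \<alpha> t n B v C p' A' \<and> profit p A \<le> profit p' A' \<and>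
            (\<forall>i \<in> {1..n}. dprice \<alpha> n B v ((K0 + n) * t) \<le> p' i)"
proof -
  let ?d = "dprice \<alpha> n B v"
  note Fd = F[unfolded feasible_def]
  note Fp = Fd[THEN conjunct1]
  note Fm = Fd[THEN conjunct2, THEN conjunct1]
  note Fa = Fd[THEN conjunct2, THEN conjunct2, THEN conjunct1]
  note Fc = Fd[THEN conjunct2, THEN conjunct2, THEN conjunct2, THEN conjunct1]
  note Fv = Fd[THEN conjunct2, THEN conjunct2, THEN conjunct2, THEN conjunct2, THEN conjunct1]
  note Fb = Fd[THEN conjunct2, THEN conjunct2, THEN conjunct2, THEN conjunct2, THEN conjunct2]
  define k where "k i = (SOME k. p i = ?d k)" for i
  have pk: "p i = ?d (k i)" if "i \<in> {1..n}" for i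
    using Fp that unfolding k_def by (metis (mono_tags, lifting) someI_ex)
  define U where "U = (\<lambda>i. k i div t) ` {i \<in> {1..n}. K0 * t \<le> k i}"
  have finU: "finite U" unfolding U_def by simp
  have cardU: "card U \<le> n"
  proof -
    have "card U \<le> card {i \<in> {1..n}. K0 * t \<le> k i}" unfolding U_def by (rule card_image_le) simp
    also have "\<dots> \<le> card {1..n}" by (rule card_mono) auto
    finally show ?thesis by simp
  qed
  have Uge: "u \<ge> K0" if uU: "u \<in> U" for u
  proof -
    obtain i where "K0 * t \<le> k i" "u = k i div t" using uU unfolding U_def by auto
    then show ?thesis using t0 div_less_iff_less_mult[OF t0, of "k i" K0] by simp
  qed
  define rk where "rk r = card {u \<in> U. u < r}" for r
  have F1: "rk r \<le> r - K0" for r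
  proof -
    have "{u \<in> U. u < r} \<subseteq> {K0..<r}" using Uge by auto
    then have "rk r \<le> card {K0..<r}" unfolding rk_def by (rule card_mono[rotated]) simp
    then show ?thesis by simp
  qed
  have F2: "rk r < card U" if "r \<in> U" for r
    unfolding rk_def using that finU by (intro psubset_card_mono) auto
  have F3: "rk r1 < rk r2" if "r1 < r2" "r1 \<in> U" for r1 r2
    unfolding rk_def using that finU by (intro psubset_card_mono) auto
  define g where "g x = (if x < K0 * t then x else (K0 + rk (x div t)) * t + x mod t)" for x
  have F4: "g x \<le> x" for x
  proof (cases "x < K0 * t")
    case False
    then have "K0 \<le> x div t" using div_less_iff_less_mult[OF t0, of x K0] by simp
    then have "K0 + rk (x div t) \<le> x div t" using F1[of "x div t"] by simp
    then have "(K0 + rk (x div t)) * t + x mod t \<le> (x div t) * t + x mod t" by (intro add_le_mono1 mult_le_mono1)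
    then show ?thesis using False unfolding g_def by simp
  qed (simp add: g_def)
  have F5: "K0 * t \<le> g x" if "K0 * t \<le> x" for x
    using that unfolding g_def by (simp add: trans_le_add1)
  have gdiv: "g x div t = (if x < K0 * t then x div t else K0 + rk (x div t))" for x
    using t0 unfolding g_def by simp
  have inU: "k i div t \<in> U" if "i \<in> {1..n}" "K0 * t \<le> k i" for i
    using that unfolding U_def by auto
  have F6: "g (k i) < (K0 + n) * t" if "i \<in> {1..n}" for i
  proof (cases "k i < K0 * t")
    case True
    have "K0 * t \<le> (K0 + n) * t" by (intro mult_le_mono1) simp
    moreover have "g (k i) = k i" using True unfolding g_def by simp
    ultimately show ?thesis using True by linarith
  next
    case False
    then have r: "rk (k i div t) + 1 \<le> n" using F2[OF inU[OF that]] cardU by simp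
    have "g (k i) < (K0 + rk (k i div t)) * t + t" using False t0 unfolding g_def by simp
    also have "\<dots> = (K0 + rk (k i div t) + 1) * t" by simp
    also have "\<dots> \<le> (K0 + n) * t" using r by (intro mult_le_mono1) simp
    finally show ?thesis .
  qed
  have gs: "g x = x" if "x < K0 * t" for x using that unfolding g_def by simp
  have gb: "g x = (K0 + rk (x div t)) * t + x mod t" if "\<not> x < K0 * t" for x
    using that unfolding g_def by simp
  have F8: "g (k i) \<le> g (k j)" if "i \<in> {1..n}" "j \<in> {1..n}" "k i \<le> k j" for i j
  proof (cases "k j < K0 * t")
    case True
    then have "k i < K0 * t" using that(3) by linarith
    then show ?thesis using True gs that(3) by simp
  next
    case jF: False
    show ?thesis
    proof (cases "k i < K0 * t")
      case True
      have "K0 * t \<le> g (k j)" using F5[of "k j"] jF by simp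
      then show ?thesis using True gs[of "k i"] by simp
    next
      case iF: False
      have dle: "k i div t \<le> k j div t" using that(3) by (rule div_le_mono)
      show ?thesis
      proof (cases "k i div t = k j div t")
        case True
        define q where "q = k j div t"
        have qi: "k i div t = q" using True q_def by simp
        have "k i = q * t + k i mod t" using div_mult_mod_eq[of "k i" t] qi by simp
        moreover have "k j = q * t + k j mod t" using div_mult_mod_eq[of "k j" t] q_def by simp
        ultimately have "k i mod t \<le> k j mod t" using that(3) by linarith
        then show ?thesis using gb[OF iF] gb[OF jF] qi q_def by simp
      next
        case False
        then have lt: "k i div t < k j div t" using dle by simp
        have "rk (k i div t) < rk (k j div t)" using F3[OF lt inU[OF that(1)]] iF by simp
        then have "(K0 + rk (k i div t) + 1) * t \<le> (K0 + rk (k j div t)) * t"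
          by (intro mult_le_mono1) simp
        then have "(K0 + rk (k i div t)) * t + t \<le> (K0 + rk (k j div t)) * t" by simp
        moreover have "k i mod t < t" using t0 by simp
        ultimately show ?thesis using gb[OF iF] gb[OF jF] by linarith
      qed
    qed
  qed
  have gdivs: "g x div t = x div t" if "x < K0 * t" for x using gs[OF that] by simp
  have gdivb: "g x div t = K0 + rk (x div t)" if "\<not> x < K0 * t" for x
    using gb[OF that] t0 by simp
  have sym: "k i div t = k j div t"
      if i: "i \<in> {1..n}" and eq: "g (k i) div t = g (k j) div t" and le: "k i \<le> k j" for i j
  proof (cases "k j < K0 * t")
    case True
    then have "k i < K0 * t" using le by linarith
    then show ?thesis using True eq gdivs[of "k i"] gdivs[of "k j"] by simp
  next
    case jF: False
    show ?thesis
    proof (cases "k i < K0 * t")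
      case True
      then have "k i div t < K0" using t0 by (simp add: less_mult_imp_div_less)
      moreover have "g (k i) div t = k i div t" using gdivs[OF True] .
      moreover have "g (k j) div t = K0 + rk (k j div t)" using gdivb[OF jF] .
      ultimately show ?thesis using eq by linarith
    next
      case iF: False
      have "K0 + rk (k i div t) = K0 + rk (k j div t)"
        using eq gdivb[OF iF] gdivb[OF jF] by simp
      then have r: "rk (k i div t) = rk (k j div t)" by simp
      have "k i div t \<le> k j div t" using le by (rule div_le_mono)
      moreover have "k i div t \<in> U" using inU[OF i] iF by simp
      moreover have "\<not> k i div t < k j div t"
      proof
        assume "k i div t < k j div t"
        from F3[OF this \<open>k i div t \<in> U\<close>] r show False by simp
      qed
      ultimately show ?thesis by simp
    qed
  qed
  have F9: "k i div t = k j div t" if "i \<in> {1..n}" "j \<in> {1..n}" "g (k i) div t = g (k j) div t" for i j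
  proof (cases "k i \<le> k j")
    case True then show ?thesis using sym[OF that(1) that(3)] by simp
  next
    case False
    then have "k j \<le> k i" by simp
    then show ?thesis using sym[OF that(2) that(3)[symmetric]] by simp
  qed
  define p' where "p' i = ?d (g (k i))" for i
  have Asub: "A \<subseteq> {1..n} \<times> B" by (rule Fa)
  have pp': "p i \<le> p' i" if "i \<in> {1..n}" for i
    unfolding p'_def pk[OF that] using dprice_mono[OF a1 F4] .
  have feas: "feasible \<alpha> t n B v C p' A"
    unfolding feasible_def
  proof (intro conjI)
    show "\<forall>i\<in>{1..n}. \<exists>k. p' i = ?d k" unfolding p'_def by blast
    show "\<forall>i j. 1 \<le> i \<and> i \<le> j \<and> j \<le> n \<longrightarrow> p' j \<le> p' i"
    proof (intro allI impI)
      fix i j assume h: "1 \<le> i \<and> i \<le> j \<and> j \<le> n"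
      have i: "i \<in> {1..n}" and j: "j \<in> {1..n}" using h by auto
      have "p j \<le> p i" using Fm h by blast
      then have "?d (k j) \<le> ?d (k i)" using pk[OF i] pk[OF j] by simp
      then have "k i \<le> k j" using dprice_le_iff[OF a1 M0] by blast
      then have "g (k i) \<le> g (k j)" using F8[OF i j] by blast
      then show "p' j \<le> p' i" unfolding p'_def by (rule dprice_mono[OF a1])
    qed
    show "A \<subseteq> {1..n} \<times> B" by (rule Asub)
    show "\<forall>i\<in>{1..n}. card {b. (i, b) \<in> A} \<le> C i" by (rule Fc)
    show "\<forall>(i, b)\<in>A. p' i \<le> real (v i b)"
    proof (intro ballI, clarify)
      fix i b assume iA: "(i, b) \<in> A"
      then have i: "i \<in> {1..n}" using Asub by auto
      have pv: "p i \<le> real (v i b)" using Fv iA by blast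
      show "p' i \<le> real (v i b)"
      proof (cases "k i < K0 * t")
        case True then show ?thesis using pv pk[OF i] unfolding p'_def g_def by simp
      next
        case False
        have "0 < p i" using pk[OF i] dprice_pos[OF a1 M0] by simp
        then have "1 \<le> v i b" using pv by simp
        moreover have "p' i \<le> ?d (K0 * t)" unfolding p'_def
          using dprice_mono[OF a1 F5] False by simp
        ultimately show ?thesis using K0 by simp
      qed
    qed
    show "\<forall>r b. card {i. (i, b) \<in> A \<and>
               (\<exists>k. r * t \<le> k \<and> k < (r + 1) * t \<and> p' i = ?d k)} \<le> 1"
    proof (intro allI)
      fix r b
      let ?S = "{i. (i, b) \<in> A \<and> (\<exists>k. r * t \<le> k \<and> k < (r + 1) * t \<and> p' i = ?d k)}"
      have "?S \<subseteq> {1..n}" using Asub by blast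
      then have finS: "finite ?S" by (rule finite_subset) simp
      have mem: "i \<in> {1..n} \<and> g (k i) div t = r" if iS: "i \<in> ?S" for i
      proof -
        obtain kk where kk: "(i, b) \<in> A" "r * t \<le> kk" "kk < (r + 1) * t" "p' i = ?d kk"
          using iS by blast
        have "kk = g (k i)" using dprice_inj[OF a1 M0 kk(4)[unfolded p'_def, symmetric]] .
        moreover have "kk div t = r" using kk(2,3) by (intro div_nat_eqI) (auto simp: mult.commute)
        ultimately show ?thesis using kk(1) Asub by auto
      qed
      have "\<forall>i\<in>?S. \<forall>j\<in>?S. i = j"
      proof (intro ballI)
        fix i j assume ij: "i \<in> ?S" "j \<in> ?S"
        let ?rz = "k i div t"
        let ?T = "{i. (i, b) \<in> A \<and> (\<exists>k. ?rz * t \<le> k \<and> k < (?rz + 1) * t \<and> p i = ?d k)}"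
        have "?T \<subseteq> {1..n}" using Asub by blast
        then have fin0: "finite ?T" by (rule finite_subset) simp
        have c0: "card ?T \<le> 1" by (rule Fb[rule_format])
        have mi: "i \<in> {1..n}" "g (k i) div t = r" using mem[OF ij(1)] by simp_all
        have mj: "j \<in> {1..n}" "g (k j) div t = r" using mem[OF ij(2)] by simp_all
        have eqr: "k j div t = ?rz" using F9[OF mi(1) mj(1)] mi(2) mj(2) by simp
        have inS0: "x \<in> ?T" if "x \<in> {i, j}" for x
        proof -
          have xij: "x = i \<or> x = j" using that by simp
          have x1: "x \<in> ?S" using xij ij by (elim disjE) (simp only:)+
          have x2: "k x div t = ?rz"
          proof (cases "x = i")
            case True then show ?thesis by simp
          next
            case False then have "x = j" using xij by simp
            then show ?thesis using eqr by simp
          qed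
          note x = x1 x2
          have "?rz * t \<le> k x" using x(2) div_times_less_eq_dividend[of "k x" t] by simp
          moreover have "k x < (?rz + 1) * t" using x(2) dividend_less_div_times[OF t0, of "k x"] by simp
          moreover have "p x = ?d (k x)" using mem[OF x(1)] by (intro pk) simp
          moreover have "(x, b) \<in> A" using x(1) by simp
          ultimately show ?thesis unfolding mem_Collect_eq by (intro conjI exI[where x="k x"])
        qed
        have "i \<in> ?T" "j \<in> ?T" using inS0 by simp_all
        moreover have "card ?T \<le> Suc 0" using c0 by simp
        then have all: "\<forall>a1\<in>?T. \<forall>a2\<in>?T. a1 = a2" by (rule iffD1[OF card_le_Suc0_iff_eq[OF fin0]])
        ultimately show "i = j" by (meson all)
      qed
      then have "card ?S \<le> Suc 0" by (rule iffD2[OF card_le_Suc0_iff_eq[OF finS]])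
      then show "card ?S \<le> 1" by simp
    qed
  qed
  have prof: "profit p A \<le> profit p' A"
    unfolding profit_def using Asub pp' by (intro sum_mono) auto
  have bnd: "\<forall>i\<in>{1..n}. ?d ((K0 + n) * t) \<le> p' i"
    unfolding p'_def using F6 dprice_mono[OF a1] by (simp add: less_imp_le)
  show ?thesis using feas prof bnd by blast
qed


lemma bitlen_le_size:
  assumes "finite B" "i \<in> {1..n}" "b \<in> B"
  shows "bitlen (v i b) \<le> inst_size n B v C"
proof -
  have "bitlen (v i b) \<le> (\<Sum>b'\<in>B. bitlen (v i b'))"
    using assms by (intro member_le_sum) auto
  also have "\<dots> \<le> (\<Sum>i'\<in>{1..n}. \<Sum>b'\<in>B. bitlen (v i' b'))"
    using assms(2) by (intro member_le_sum) auto
  finally show ?thesis unfolding inst_size_def by linarith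
qed

lemma price_in_D:
  assumes a1: "\<alpha> > 1" and F: "feasible \<alpha> t n B v C p A" and i: "i \<in> {1..n}"
    and bnd: "dprice \<alpha> n B v l \<le> p i"
  shows "p i \<in> dprice \<alpha> n B v ` {..l}"
proof -
  obtain k where k: "p i = dprice \<alpha> n B v k" using F i unfolding feasible_def by blast
  show ?thesis
  proof (cases "maxval n B v = 0")
    case True
    then have "p i = dprice \<alpha> n B v 0" using k dprice_zero by metis
    then show ?thesis by blast
  next
    case False
    then have "k \<le> l" using dprice_le_iff[OF a1, of n B v l k] bnd k by simp
    then show ?thesis using k by blast
  qed
qed

theorem lemma13:
  fixes \<alpha> :: rat and t :: nat
  assumes "\<alpha> > 1" and "t > 0"
  shows "\<exists>c::nat. \<forall>n (B::nat set) v C. finite B \<longrightarrow>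
           (\<exists>l. l \<le> c * (inst_size n B v C + 1) \<and>
              (\<exists>p A. optimal \<alpha> t n B v C p A \<and>
                     (\<forall>i \<in> {1..n}. p i \<ge> dprice \<alpha> n B v l)))"
proof -
  note a1 = assms(1) and t0 = assms(2)
  have a: "real_of_rat \<alpha> > 1" using a1 by (simp add: of_rat_less_1_iff)
  obtain m where m: "2 < real_of_rat \<alpha> ^ m" using real_arch_pow[OF a] by blast
  show ?thesis
  proof (rule exI[of _ "(m + 1) * t"], intro allI impI)
    fix n :: nat and B :: "nat set" and v :: "nat \<Rightarrow> nat \<Rightarrow> nat" and C :: "nat \<Rightarrow> nat"
    assume fB: "finite B"
    define M where "M = maxval n B v"
    define S where "S = inst_size n B v C"
    define K0 where "K0 = m * bitlen M"
    define l where "l = (K0 + n) * t"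
    let ?d = "dprice \<alpha> n B v"
    have bitS: "bitlen M \<le> S + 1"
      using maxval_cases[OF fB, of n v]
    proof
      assume "maxval n B v = 0" then show ?thesis unfolding M_def by simp
    next
      assume "\<exists>i b. i \<in> {1..n} \<and> b \<in> B \<and> maxval n B v = v i b"
      then obtain i b where "i \<in> {1..n}" "b \<in> B" "M = v i b" unfolding M_def by blast
      then show ?thesis using bitlen_le_size[OF fB, of i n b v C] unfolding S_def by simp
    qed
    have nS: "n \<le> S" unfolding S_def inst_size_def by simp
    have "K0 + n \<le> m * (S + 1) + (S + 1)" unfolding K0_def using bitS nS
      by (intro add_mono mult_le_mono2) simp_all
    also have "\<dots> = (m + 1) * (S + 1)" by simp
    finally have "l \<le> (m + 1) * (S + 1) * t" unfolding l_def by (rule mult_le_mono1)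
    moreover have "(m + 1) * (S + 1) * t = (m + 1) * t * (S + 1)" by (simp only: ac_simps)
    ultimately have lb: "l \<le> (m + 1) * t * (inst_size n B v C + 1)" unfolding S_def
      by simp
    have K0d: "?d (K0 * t) \<le> 1" if M0: "maxval n B v > 0"
    proof -
      have "real M < 2 ^ bitlen M" using bitlen_gt[of M] by (metis of_nat_less_iff of_nat_numeral of_nat_power)
      also have "\<dots> \<le> (real_of_rat \<alpha> ^ m) ^ bitlen M"
        using m by (intro power_mono) simp_all
      also have "\<dots> = real_of_rat \<alpha> ^ K0" unfolding K0_def by (simp add: power_mult)
      also have "\<dots> \<le> real_of_rat \<alpha> ^ (K0 * t)"
        using a t0 by (intro power_increasing) simp_all
      finally have "real M \<le> real_of_rat \<alpha> ^ (K0 * t)" by simp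
      moreover have "0 < real_of_rat \<alpha> ^ (K0 * t)" using a by simp
      ultimately show ?thesis unfolding dprice_def M_def by simp
    qed
    define F where "F = {(p, A). feasible \<alpha> t n B v C p A \<and> (\<forall>i\<in>{1..n}. ?d l \<le> p i)}"
    have dom: "\<exists>p'' A''. (p'', A'') \<in> F \<and> profit p' A' \<le> profit p'' A''"
      if Fp: "feasible \<alpha> t n B v C p' A'" for p' A'
    proof (cases "maxval n B v = 0")
      case True
      have "\<forall>i\<in>{1..n}. ?d l \<le> p' i"
      proof
        fix i assume "i \<in> {1..n}"
        then obtain k where "p' i = ?d k" using Fp unfolding feasible_def by blast
        then show "?d l \<le> p' i" using dprice_zero[OF True] by simp
      qed
      then show ?thesis using Fp unfolding F_def by blast
    next
      case False
      then have M0: "maxval n B v > 0" by simp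
      from exchange[OF a1 t0 M0 K0d[OF M0] Fp]
      show ?thesis unfolding F_def l_def by blast
    qed
    define X where "X = {1..n} \<times> B"
    define D where "D = ?d ` {..l}"
    define V where "V = (\<lambda>(p, A). profit p A) ` F"
    have sub: "V \<subseteq> (\<lambda>(A, q). sum q A) ` (Pow X \<times> PiE X (\<lambda>_. D))"
    proof
      fix y assume "y \<in> V"
      then obtain p A where pA: "(p, A) \<in> F" "y = profit p A" unfolding V_def by auto
      have Fe: "feasible \<alpha> t n B v C p A" and bd: "\<forall>i\<in>{1..n}. ?d l \<le> p i"
        using pA(1) unfolding F_def by simp_all
      have AX: "A \<subseteq> X" using Fe unfolding feasible_def X_def by blast
      define q where "q = restrict (\<lambda>x. p (fst x)) X"
      have "y = sum q A" unfolding pA(2) profit_def q_def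
        using AX by (intro sum.cong) auto
      moreover have "q \<in> PiE X (\<lambda>_. D)"
        unfolding q_def D_def
      proof (rule iffD2[OF restrict_PiE_iff], rule ballI)
        fix x assume "x \<in> X"
        then have "fst x \<in> {1..n}" unfolding X_def by auto
        then show "p (fst x) \<in> ?d ` {..l}" using price_in_D[OF a1 Fe _ bd[rule_format]] by blast
      qed
      ultimately show "y \<in> (\<lambda>(A, q). sum q A) ` (Pow X \<times> PiE X (\<lambda>_. D))"
        using AX by force
    qed
    have finV: "finite V"
      by (rule finite_subset[OF sub]) (simp add: X_def D_def fB finite_PiE)
    have feas0: "feasible \<alpha> t n B v C (\<lambda>_. ?d 0) {}"
      unfolding feasible_def by auto
    have "((\<lambda>_. ?d 0), {}) \<in> F" unfolding F_def using feas0 dprice_mono[OF a1, of 0 l] by simp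
    then have neV: "V \<noteq> {}" unfolding V_def by blast
    have "Max V \<in> V" using finV neV by (rule Max_in)
    then obtain p A where pA: "(p, A) \<in> F" "profit p A = Max V" unfolding V_def by auto
    have opt: "optimal \<alpha> t n B v C p A"
      unfolding optimal_def
    proof (intro conjI allI impI)
      show "feasible \<alpha> t n B v C p A" using pA(1) unfolding F_def by simp
      fix p' A' assume "feasible \<alpha> t n B v C p' A'"
      then obtain p'' A'' where h: "(p'', A'') \<in> F" "profit p' A' \<le> profit p'' A''"
        using dom by blast
      have "profit p'' A'' \<in> V" using h(1) unfolding V_def by force
      then have "profit p'' A'' \<le> Max V" using finV by simp
      then show "profit p' A' \<le> profit p A" using h(2) pA(2) by simp
    qed
    have "\<forall>i\<in>{1..n}. ?d l \<le> p i" using pA(1) unfolding F_def by simp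
    then show "\<exists>l. l \<le> (m + 1) * t * (inst_size n B v C + 1) \<and>
              (\<exists>p A. optimal \<alpha> t n B v C p A \<and> (\<forall>i\<in>{1..n}. ?d l \<le> p i))"
      using lb opt by blast
  qed
qed

end
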